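(* Let $\{x_k\}$ be an infinite sequence generated by the Subgradient-InexP method (with any positive stepsizes $t_k$), under the standing assumptions, and let $\nu:=\frac{1+2\bar\gamma}{1-2\bar\lambda}$. Then for every $x\in C$ and every $k=0,1,\dots$, $$\|x_{k+1}-x\|^2\le\|x_k-x\|^2+\nu t_k^2\|s_k\|^2-2t_k\big[f(x_k)-f(x)-\epsilon_k\big].$$
   Context: Problem: minimize a convex function $f:\mathbb{R}^n\to\mathbb{R}$ over a nonempty closed convex set $C\subset\mathbb{R}^n$. For $\epsilon\ge0$, $\partial_\epsilon f(x):=\{s\in\mathbb{R}^n: f(y)\ge f(x)+\langle s,y-x\rangle-\epsilon\ \forall y\in\mathbb{R}^n\}$; $\partial f=\partial_0 f$. A relative error tolerance function with forcing parameters $\gamma,\theta,\lambda\ge0$ is any $\varphi_{\gamma,\theta,\lambda}:(\mathbb{R}^n)^3\to[0,\infty)$ with $\varphi_{\gamma,\theta,\lambda}(u,v,w)\le\gamma\|v-u\|^2+\theta\|w-v\|^2+\lambda\|w-u\|^2$. For $u\in C$, $\mathcal{P}_C(\varphi_{\gamma,\theta,\lambda},u,v):=\{w\in C:\langle v-w,z-w\rangle\le\varphi_{\gamma,\theta,\lambda}(u,v,w)\ \forall z\in C\}$. Subgradient-InexP method: given nonnegative sequences $\{\epsilon_k\},\{\gamma_k\},\{\theta_k\},\{\lambda_k\}$ and $x_0\in C$, at iteration $k$: if $0\in\partial f(x_k)$ stop; otherwise choose a nonzero $s_k\in\partial_{\epsilon_k}f(x_k)$, a stepsize $t_k>0$,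 and any $x_{k+1}\in\mathcal{P}_C(\varphi_{\gamma_k,\theta_k,\lambda_k},x_k,x_k-t_ks_k)$ (for some relative error tolerance functions $\varphi_{\gamma_k,\theta_k,\lambda_k}$). Standing assumptions: there exist $\bar\gamma\ge0$ and $\bar\theta,\bar\lambda\in[0,1/2)$ with $\gamma_k\in[0,\bar\gamma)$, $\theta_k\in[0,\bar\theta)$, $\lambda_k\in[0,\bar\lambda)$ for all $k$, and the generated sequence is infinite. *)

theory Defs
  imports "HOL-Analysis.Analysis"
begin

definition eps_subdiff :: "('a::real_inner \<Rightarrow> real) \<Rightarrow> real \<Rightarrow> 'a \<Rightarrow> 'a set" where
  "eps_subdiff f eps x = {s. \<forall>y. f y \<ge> f x + inner s (y - x) - eps}"

definition rel_err_tol :: "real \<Rightarrow> real \<Rightarrow> real \<Rightarrow> ('a::real_normed_vector \<Rightarrow> 'a \<Rightarrow> 'a \<Rightarrow> real) \<Rightarrow> bool" where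
  "rel_err_tol gam th la phi \<longleftrightarrow>
     (\<forall>u v w. 0 \<le> phi u v w \<and>
        phi u v w \<le> gam * (norm (v - u))\<^sup>2 + th * (norm (w - v))\<^sup>2 + la * (norm (w - u))\<^sup>2)"

definition inexact_proj :: "'a::real_inner set \<Rightarrow> ('a \<Rightarrow> 'a \<Rightarrow> 'a \<Rightarrow> real) \<Rightarrow> 'a \<Rightarrow> 'a \<Rightarrow> 'a set" where
  "inexact_proj C phi u v = {w \<in> C. \<forall>z\<in>C. inner (v - w) (z - w) \<le> phi u v w}"

end

theory Submission
  imports Defs
begin

lemma ident:
  fixes u w y s :: "'a::real_inner"
  shows "(norm (w - y))\<^sup>2 = (norm (u - y))\<^sup>2 + (norm (t *\<^sub>R s))\<^sup>2 - (norm (w - (u - t *\<^sub>R s)))\<^sup>2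
     - 2 * t * inner s (u - y) + 2 * inner ((u - t *\<^sub>R s) - w) (y - w)"
  unfolding power2_norm_eq_inner by (simp add: inner_diff_left inner_diff_right inner_commute algebra_simps)
lemma ident2:
  fixes u w s :: "'a::real_inner"
  shows "inner ((u - t *\<^sub>R s) - w) (u - w) = ((norm (w-u))\<^sup>2 + (norm (w - (u - t *\<^sub>R s)))\<^sup>2 - (norm (t *\<^sub>R s))\<^sup>2)/2"
  unfolding power2_norm_eq_inner by (simp add: inner_diff_left inner_diff_right inner_commute algebra_simps)
lemma scal:
  fixes A B Cc p1 p2 g th l gb lb :: real
  assumes "0 \<le> A" "0 \<le> B" "0 \<le> Cc" "0\<le>g" "g<gb" "0\<le>th" "th<1/2" "0\<le>l" "l<lb" "lb<1/2"
   "p1 \<le> g*B + th*Cc + l*A" "p2 \<le> g*B + th*Cc + l*A" "p2 = (A + Cc - B)/2"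
  shows "B - Cc + 2*p1 \<le> ((1+2*gb)/(1-2*lb)) * B"
proof -
  define P where "P = (1+2*g)*B - (1-2*th)*Cc"
  have h1: "(1-2*l)*A \<le> P" using assms unfolding P_def by (simp add: algebra_simps)
  have "B - Cc + 2*p1 \<le> P + 2*l*A" using assms unfolding P_def by (simp add: algebra_simps)
  also have "2*l*A \<le> 2*l*P/(1-2*l)"
  proof -
    have "A \<le> P/(1-2*l)" using h1 assms by (simp add: le_divide_eq mult.commute)
    hence "2*l*A \<le> 2*l*(P/(1-2*l))" using assms by (intro mult_left_mono) auto
    thus ?thesis by simp
  qed
  also have "P + 2*l*P/(1-2*l) = P/(1-2*l)" using assms by (simp add: field_simps)
  also have "P/(1-2*l) \<le> (1+2*g)*B/(1-2*l)" using assms unfolding P_def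
    by (intro divide_right_mono) (auto intro: mult_nonneg_nonneg)
  also have "(1+2*g)*B/(1-2*l) \<le> (1+2*gb)*B/(1-2*lb)"
  proof (rule frac_le)
    show "0 \<le> (1+2*gb)*B" using assms by simp
    show "(1+2*g)*B \<le> (1+2*gb)*B" using assms by (intro mult_right_mono) auto
    show "0 < 1-2*lb" using assms by simp
    show "1-2*lb \<le> 1-2*l" using assms by simp
  qed
  finally show ?thesis by simp
qed

theorem mainTheorem2:
  fixes f :: "'a::euclidean_space \<Rightarrow> real"
    and C :: "'a set"
    and x s :: "nat \<Rightarrow> 'a"
    and t eps gam th la :: "nat \<Rightarrow> real"
    and phi :: "nat \<Rightarrow> 'a \<Rightarrow> 'a \<Rightarrow> 'a \<Rightarrow> real"
    and gbar thbar labar :: real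
  assumes f_convex: "convex_on UNIV f"
    and C_convex: "convex C" and C_closed: "closed C" and C_ne: "C \<noteq> {}"
    and x0: "x 0 \<in> C"
    and eps_nonneg: "\<And>k. eps k \<ge> 0"
    and gbar: "gbar \<ge> 0"
    and thbar: "0 \<le> thbar" "thbar < 1/2"
    and labar: "0 \<le> labar" "labar < 1/2"
    and gam: "\<And>k. 0 \<le> gam k \<and> gam k < gbar"
    and th: "\<And>k. 0 \<le> th k \<and> th k < thbar"
    and la: "\<And>k. 0 \<le> la k \<and> la k < labar"
    and nostop: "\<And>k. 0 \<notin> eps_subdiff f 0 (x k)"
    and s_nz: "\<And>k. s k \<noteq> 0"
    and s_sub: "\<And>k. s k \<in> eps_subdiff f (eps k) (x k)"
    and t_pos: "\<And>k. t k > 0"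
    and phi: "\<And>k. rel_err_tol (gam k) (th k) (la k) (phi k)"
    and step: "\<And>k. x (Suc k) \<in> inexact_proj C (phi k) (x k) (x k - t k *\<^sub>R s k)"
  shows "\<forall>y\<in>C. \<forall>k. (norm (x (Suc k) - y))\<^sup>2
           \<le> (norm (x k - y))\<^sup>2 + ((1 + 2 * gbar) / (1 - 2 * labar)) * (t k)\<^sup>2 * (norm (s k))\<^sup>2
              - 2 * t k * (f (x k) - f y - eps k)"
proof (intro ballI allI)
  fix y k assume yC: "y \<in> C"
  have xC: "x k \<in> C" for k
  proof (cases k)
    case 0 then show ?thesis using x0 by simp
  next
    case (Suc n) then show ?thesis using step[of n] unfolding inexact_proj_def by auto
  qed
  define u where "u = x k"
  define w where "w = x (Suc k)"
  define v where "v = u - t k *\<^sub>R s k"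
  have wC: "w \<in> C" and pr: "\<And>z. z \<in> C \<Longrightarrow> inner (v - w) (z - w) \<le> phi k u v w"
    using step[of k] unfolding inexact_proj_def u_def w_def v_def by auto
  have phb: "phi k u v w \<le> gam k * (norm (t k *\<^sub>R s k))\<^sup>2 + th k * (norm (w - v))\<^sup>2 + la k * (norm (w - u))\<^sup>2"
  proof -
    have "norm (v - u) = norm (t k *\<^sub>R s k)" unfolding v_def by (simp add: norm_minus_commute)
    thus ?thesis using phi[of k] unfolding rel_err_tol_def by metis
  qed
  have p1: "inner (v - w) (y - w) \<le> phi k u v w" using pr yC by auto
  have p2: "inner (v - w) (u - w) \<le> phi k u v w" using pr xC u_def by auto
  have key: "(norm (t k *\<^sub>R s k))\<^sup>2 - (norm (w - v))\<^sup>2 + 2 * inner (v - w) (y - w)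
     \<le> ((1 + 2 * gbar) / (1 - 2 * labar)) * (norm (t k *\<^sub>R s k))\<^sup>2"
  proof -
    have i2: "inner (v - w) (u - w) = ((norm (w - u))\<^sup>2 + (norm (w - v))\<^sup>2 - (norm (t k *\<^sub>R s k))\<^sup>2) / 2"
      unfolding v_def by (rule ident2)
    show ?thesis
      apply (rule scal[of "(norm (w - u))\<^sup>2" "(norm (t k *\<^sub>R s k))\<^sup>2" "(norm (w - v))\<^sup>2" "gam k" gbar "th k" "la k" labar "inner (v - w) (y - w)" "inner (v - w) (u - w)"])
      using gam[of k] th[of k] la[of k] thbar labar p1 p2 phb i2 by auto
  qed
  have id: "(norm (w - y))\<^sup>2 = (norm (u - y))\<^sup>2 + (norm (t k *\<^sub>R s k))\<^sup>2 - (norm (w - v))\<^sup>2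
     - 2 * t k * inner (s k) (u - y) + 2 * inner (v - w) (y - w)"
    unfolding v_def by (rule ident)
  have sg: "f y \<ge> f u + inner (s k) (y - u) - eps k"
    using s_sub[of k] unfolding eps_subdiff_def u_def by auto
  have "inner (s k) (y - u) = - inner (s k) (u - y)" by (simp add: inner_diff_right)
  hence sg2: "- inner (s k) (u - y) \<le> f y - f u + eps k" using sg by linarith
  have "- 2 * t k * inner (s k) (u - y) \<le> - 2 * t k * (f u - f y - eps k)"
    using mult_left_mono[OF sg2, of "2 * t k"] t_pos[of k] by (simp add: algebra_simps)
  moreover have "(norm (t k *\<^sub>R s k))\<^sup>2 = (t k)\<^sup>2 * (norm (s k))\<^sup>2"
    by (simp add: power_mult_distrib)
  ultimately show "(norm (x (Suc k) - y))\<^sup>2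
           \<le> (norm (x k - y))\<^sup>2 + ((1 + 2 * gbar) / (1 - 2 * labar)) * (t k)\<^sup>2 * (norm (s k))\<^sup>2
              - 2 * t k * (f (x k) - f y - eps k)"
    using id key unfolding u_def w_def by (simp add: algebra_simps)
qed

end
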